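(* The truncated cube (the convex polyhedron with $8$ triangular and $6$ octagonal faces obtained by truncating the vertices of a cube, in which every triangle is surrounded by three octagons and no two triangles share a vertex) has no facet path.
   Context: For a polyhedron, the (vertex-facet) incidence graph is the bipartite graph whose nodes are the faces (facets) and vertices of the polyhedron, with an arc $(v,f)$ whenever $v$ is a vertex of face $f$. A facet path is a trail $(v_0,f_1,v_1,f_2,\dots,f_k,v_k)$ in the incidence graph (no arc repeated) that contains every facet node exactly once; vertex nodes may repeat. *)

theory Defs
  imports Main
begin

text \<open>A polyhedron is represented combinatorially by its vertex set V, its facet set F
and its incidence relation inc (inc v f means v is a vertex of facet f).
A facet path is a trail v0, f1, v1, ..., fk, vk in the bipartite incidence graph
(consecutive nodes adjacent, no arc repeated) visiting every facet node exactly once.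
We encode it by the vertex list vs = [v0,...,vk] and the facet list fs = [f1,...,fk].\<close>

definition trail_arcs :: "'v list \<Rightarrow> 'f list \<Rightarrow> ('v \<times> 'f) list" where
  "trail_arcs vs fs = concat (map (\<lambda>i. [(vs ! i, fs ! i), (vs ! Suc i, fs ! i)]) [0..<length fs])"

definition facet_path ::
  "'v set \<Rightarrow> 'f set \<Rightarrow> ('v \<Rightarrow> 'f \<Rightarrow> bool) \<Rightarrow> 'v list \<Rightarrow> 'f list \<Rightarrow> bool" where
  "facet_path V F inc vs fs \<longleftrightarrow>
     length vs = Suc (length fs) \<and>
     set vs \<subseteq> V \<and> set fs \<subseteq> F \<and>
     (\<forall>i < length fs. inc (vs ! i) (fs ! i) \<and> inc (vs ! Suc i) (fs ! i)) \<and>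
     distinct (trail_arcs vs fs) \<and>
     distinct fs \<and> set fs = F"

definition has_facet_path :: "'v set \<Rightarrow> 'f set \<Rightarrow> ('v \<Rightarrow> 'f \<Rightarrow> bool) \<Rightarrow> bool" where
  "has_facet_path V F inc \<longleftrightarrow> (\<exists>vs fs. facet_path V F inc vs fs)"

text \<open>Cube vertices are c \<in> {0..<8}, read as bit vectors (bit j of c = odd (c div 2^j)),
axes are j \<in> {0,1,2}. The truncated cube has one vertex (c,i) for each cube vertex c
and each axis i: the point on the cube edge at c in direction i near c (24 vertices).
Its facets are the 8 triangles Tri c (cutting off cube vertex c), with vertices (c,0),(c,1),(c,2),
and the 6 octagons Oct j b (the truncated cube facet with x_j = b), with vertices (c,i)
where bit j of c is b and i \<noteq> j.\<close>

datatype tc_face = Tri nat | Oct nat bool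

definition tc_vertices :: "(nat \<times> nat) set" where
  "tc_vertices = {0..<8} \<times> {0..<3}"

definition tc_faces :: "tc_face set" where
  "tc_faces = Tri ` {0..<8} \<union> {Oct j b | j b. j < 3}"

fun tc_inc :: "nat \<times> nat \<Rightarrow> tc_face \<Rightarrow> bool" where
  "tc_inc (c, i) (Tri d) \<longleftrightarrow> (c, i) \<in> tc_vertices \<and> d = c"
| "tc_inc (c, i) (Oct j b) \<longleftrightarrow> (c, i) \<in> tc_vertices \<and> j < 3 \<and> j \<noteq> i \<and> odd (c div 2 ^ j) = b"

end

theory Submission
  imports Defs
begin

fun is_tri :: "tc_face \<Rightarrow> bool" where
  "is_tri (Tri _) = True" | "is_tri (Oct _ _) = False"

lemma nonconsec_bound:
  "(\<forall>i. Suc i < length xs \<longrightarrow> \<not> (P (xs ! i) \<and> P (xs ! Suc i))) \<Longrightarrow>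
   2 * length (filter P xs) \<le> length xs + 1"
proof (induction xs rule: induct_list012)
  case 1 then show ?case by simp
next
  case (2 x) then show ?case by simp
next
  case (3 x y zs)
  have h1: "\<forall>i. Suc i < length (y # zs) \<longrightarrow> \<not> (P ((y#zs) ! i) \<and> P ((y#zs) ! Suc i))"
    using "3.prems" by (metis Suc_less_eq length_Cons nth_Cons_Suc)
  have h2: "\<forall>i. Suc i < length zs \<longrightarrow> \<not> (P (zs ! i) \<and> P (zs ! Suc i))"
    using h1 by (metis Suc_less_eq length_Cons nth_Cons_Suc)
  have xy: "\<not> (P x \<and> P y)" using "3.prems" by (metis length_Cons nth_Cons_0 nth_Cons_Suc zero_less_Suc Suc_less_eq)
  show ?case
  proof (cases "P x")
    case True
    then have "\<not> P y" using xy by blast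
    then show ?thesis using True "3.IH"(1)[OF h2] by simp
  next
    case False
    then show ?thesis using "3.IH"(2)[OF h1] by simp
  qed
qed

lemma tc_faces_explicit:
  "tc_faces = {Oct 0 True, Oct 0 False, Oct 1 True, Oct 1 False, Oct 2 True, Oct 2 False,
     Tri 0, Tri 1, Tri 2, Tri 3, Tri 4, Tri 5, Tri 6, Tri 7}"
proof -
  have a: "{0..<8::nat} = {0,1,2,3,4,5,6,7}"
    by (simp add: atLeast0LessThan numeral_eq_Suc lessThan_Suc insert_commute)
  have j: "\<And>j::nat. j < 3 \<longleftrightarrow> j = 0 \<or> j = 1 \<or> j = 2" by auto
  have b: "{Oct j b | j b. j < 3} = {Oct 0 True, Oct 0 False, Oct 1 True, Oct 1 False, Oct 2 True, Oct 2 False}"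
  proof (rule set_eqI)
    fix x show "x \<in> {Oct j b | j b. j < 3} \<longleftrightarrow> x \<in> {Oct 0 True, Oct 0 False, Oct 1 True, Oct 1 False, Oct 2 True, Oct 2 False}"
      by (cases x) (auto simp: j)
  qed
  show ?thesis unfolding tc_faces_def a b by simp
qed

theorem mainTheorem10:
  shows "\<not> has_facet_path tc_vertices tc_faces tc_inc"
proof
  assume "has_facet_path tc_vertices tc_faces tc_inc"
  then obtain vs fs where fp: "facet_path tc_vertices tc_faces tc_inc vs fs"
    unfolding has_facet_path_def by blast
  have len: "length vs = Suc (length fs)" and inc: "\<forall>i < length fs. tc_inc (vs ! i) (fs ! i) \<and> tc_inc (vs ! Suc i) (fs ! i)"
    and dist: "distinct fs" and setfs: "set fs = tc_faces"
    using fp unfolding facet_path_def by auto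
  have lfs: "length fs = 14"
    using distinct_card[OF dist] setfs by (simp add: tc_faces_explicit)
  have ltri: "length (filter is_tri fs) = 8"
  proof -
    have "set (filter is_tri fs) = {x \<in> tc_faces. is_tri x}" using setfs by auto
    also have "\<dots> = Tri ` {0..<8}" unfolding tc_faces_def by auto
    finally have s: "set (filter is_tri fs) = Tri ` {0..<8}" .
    have "card (Tri ` {0..<8::nat}) = 8" by (simp add: card_image inj_on_def)
    moreover have "distinct (filter is_tri fs)" using dist by simp
    ultimately show ?thesis using distinct_card s by metis
  qed
  have nc: "\<forall>i. Suc i < length fs \<longrightarrow> \<not> (is_tri (fs ! i) \<and> is_tri (fs ! Suc i))"
  proof (intro allI impI notI)
    fix i assume i: "Suc i < length fs" and t: "is_tri (fs ! i) \<and> is_tri (fs ! Suc i)"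
    obtain d where d: "fs ! i = Tri d" using t by (cases "fs ! i") auto
    obtain d' where d': "fs ! Suc i = Tri d'" using t by (cases "fs ! Suc i") auto
    obtain c k where ck: "vs ! Suc i = (c, k)" by fastforce
    have "tc_inc (vs ! Suc i) (fs ! i)" using inc i by auto
    moreover have "tc_inc (vs ! Suc i) (fs ! Suc i)" using inc i by auto
    ultimately have "fs ! i = fs ! Suc i" using d d' ck by simp
    then show False using dist i by (simp add: nth_eq_iff_index_eq)
  qed
  show False using nonconsec_bound[OF nc] lfs ltri by simp
qed

end
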